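(* Let $f:\mathbb{R}^n\to\mathbb{R}$ be convex and $L$-smooth, $h$ proper closed convex with $\mathrm{dom}\, h\subset\mathrm{dom}\, f$, $\phi=f+h$, $\lambda>0$, $x_0\in\mathbb{R}^n$. Run the ACG method (see context) with this $x_0$, $g=f+\frac1{2\lambda}\|\cdot-x_0\|^2$, $\mu=1/\lambda$, $\psi=\phi+\frac1{2\lambda}\|\cdot-x_0\|^2$. For $j\ge1$ let $\hat x_j=\mathrm{argmin}_{u\in\mathbb{R}^n}\Gamma_j(u)$ and $v_j=(x_0-x_j)/A_j$. If $j\ge1$ and $A_j\ge3\lambda$, then (a) $\psi(y_j)-\Gamma_j(\hat x_j)\le\frac{1}{2A_j}\|\hat x_j-x_0\|^2\le\frac{1}{A_j-2\lambda}\|y_j-x_0\|^2$; (b) $\|v_j\|\le\frac{3\|y_j-x_0\|}{2A_j}$.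
   Context: $\ell_g(u;x)=g(x)+\langle\nabla g(x),u-x\rangle$. ACG method for $\min\psi=g+h$ ($g$ $\mu$-strongly convex, $(L+\mu)$-smooth): $A_0=0$, $\tau_0=1/L$, $y_0=x_0$; for $j\ge0$: $a_j=\frac{\tau_j+\sqrt{\tau_j^2+4\tau_jA_j}}{2}$, $\tau_{j+1}=\tau_j+\mu a_j/L$, $A_{j+1}=A_j+a_j$, $\tilde x_j=\frac{A_j}{A_{j+1}}y_j+\frac{a_j}{A_{j+1}}x_j$; $\tilde y_{j+1}=\mathrm{argmin}_u\{\ell_g(u;\tilde x_j)+h(u)+\frac{L+\mu}{2}\|u-\tilde x_j\|^2\}$; $y_{j+1}\in\mathrm{Argmin}\{\psi(u):u\in\{y_j,\tilde y_{j+1}\}\}$; $x_{j+1}=\frac{(L+\mu)a_j\tilde y_{j+1}-\frac{A_ja_jL}{A_{j+1}}y_j}{A_{j+1}\mu+1}$. Further $\tilde\gamma_j(u)=\ell_g(u;\tilde x_j)+h(u)+\frac\mu2\|u-\tilde x_j\|^2$, $\gamma_j(u)=\tilde\gamma_j(\tilde y_{j+1})+L\langle\tilde x_j-\tilde y_{j+1},u-\tilde y_{j+1}\rangle+\frac\mu2\|u-\tilde y_{j+1}\|^2$, $\Gamma_0\equiv0$, $\Gamma_{j+1}=(A_j\Gamma_j+a_j\gamma_j)/A_{j+1}$. *)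

theory Defs
  imports "HOL-Analysis.Analysis"
begin

definition epigraph :: "('a \<Rightarrow> ereal) \<Rightarrow> ('a \<times> real) set" where
  "epigraph h = {(x, t). h x \<le> ereal t}"

definition proper_fun :: "('a \<Rightarrow> ereal) \<Rightarrow> bool" where
  "proper_fun h \<longleftrightarrow> (\<forall>x. h x \<noteq> -\<infinity>) \<and> (\<exists>x. h x < \<infinity>)"

definition closed_convex_proper ::
  "('a::real_normed_vector \<Rightarrow> ereal) \<Rightarrow> bool" where
  "closed_convex_proper h \<longleftrightarrow> proper_fun h \<and> convex (epigraph h) \<and> closed (epigraph h)"

definition lin_approx :: "('a::real_inner \<Rightarrow> real) \<Rightarrow> ('a \<Rightarrow> 'a) \<Rightarrow> 'a \<Rightarrow> 'a \<Rightarrow> real" where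
  "lin_approx g dg x u = g x + inner (dg x) (u - x)"

end

theory Submission
  imports Defs
begin

lemma line_deriv:
  fixes f :: "'a::real_inner \<Rightarrow> real"
  assumes "\<And>u. (f has_derivative (\<lambda>v. inner (df u) v)) (at u)"
  shows "((\<lambda>t. f (x + t *\<^sub>R d)) has_real_derivative inner (df (x + t *\<^sub>R d)) d) (at t)"
proof -
  have 1: "((\<lambda>t. x + t *\<^sub>R d) has_derivative (\<lambda>s. s *\<^sub>R d)) (at t)"
    by (auto intro!: derivative_eq_intros)
  have "((\<lambda>t. f (x + t *\<^sub>R d)) has_derivative (\<lambda>s. inner (df (x + t *\<^sub>R d)) (s *\<^sub>R d))) (at t)"
    using has_derivative_compose[OF 1 assms] by simp
  moreover have "(\<lambda>s. inner (df (x + t *\<^sub>R d)) (s *\<^sub>R d)) = (*) (inner (df (x + t *\<^sub>R d)) d)"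
    by (auto simp: mult.commute)
  ultimately show ?thesis
    by (simp add: has_field_derivative_def)
qed

lemma descent:
  fixes f :: "'a::real_inner \<Rightarrow> real"
  assumes grad: "\<And>u. (f has_derivative (\<lambda>v. inner (df u) v)) (at u)"
    and sm: "\<And>u w. norm (df u - df w) \<le> L * norm (u - w)"
  shows "f y \<le> f x + inner (df x) (y - x) + L / 2 * norm (y - x)^2"
proof -
  define d where "d = y - x"
  define p where "p = (\<lambda>t. f (x + t *\<^sub>R d) - t * inner (df x) d - L / 2 * t^2 * norm d ^ 2)"
  have "p 1 \<le> p 0"
  proof (rule DERIV_nonpos_imp_nonincreasing[of 0 1 p])
    fix t :: real assume t: "0 \<le> t" "t \<le> 1"
    have D: "DERIV p t :> inner (df (x + t *\<^sub>R d)) d - inner (df x) d - L / 2 * (2 * t) * norm d ^ 2"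
      unfolding p_def
      by (auto intro!: derivative_eq_intros line_deriv[OF grad])
    have "inner (df (x + t *\<^sub>R d) - df x) d \<le> norm (df (x + t *\<^sub>R d) - df x) * norm d"
      by (rule norm_cauchy_schwarz)
    also have "\<dots> \<le> L * norm (t *\<^sub>R d) * norm d"
      using sm[of "x + t *\<^sub>R d" x] by (simp add: mult_right_mono)
    also have "\<dots> = L * t * norm d ^ 2" using t by (simp add: power2_eq_square)
    finally have "inner (df (x + t *\<^sub>R d)) d - inner (df x) d - L / 2 * (2 * t) * norm d ^ 2 \<le> 0"
      by (simp add: inner_diff_left)
    with D show "\<exists>y. DERIV p t :> y \<and> y \<le> 0" by blast
  qed simp
  then show ?thesis unfolding p_def d_def by simp
qed

lemma convex_grad:
  fixes f :: "'a::real_inner \<Rightarrow> real"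
  assumes cvx: "convex_on UNIV f"
    and grad: "\<And>u. (f has_derivative (\<lambda>v. inner (df u) v)) (at u)"
  shows "f x + inner (df x) (u - x) \<le> f u"
proof (rule ccontr)
  assume neg: "\<not> ?thesis"
  define d where "d = u - x"
  define p where "p = (\<lambda>t. f (x + t *\<^sub>R d) - t * (f u - f x))"
  have D: "DERIV p 0 :> inner (df x) d - (f u - f x)"
    unfolding p_def
    using line_deriv[OF grad, where x=x and t=0 and d=d]
    by (auto intro!: derivative_eq_intros)
  have "0 < inner (df x) d - (f u - f x)" using neg by (simp add: d_def)
  from DERIV_pos_inc_right[OF D this] obtain e where e: "e > 0" "\<forall>h>0. h < e \<longrightarrow> p 0 < p (0 + h)" by blast
  define h where "h = min (e/2) (1/2)"
  have h: "0 < h" "h < e" "h \<le> 1" using e by (auto simp: h_def)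
  have "p 0 < p h" using e h by auto
  moreover have "f ((1 - h) *\<^sub>R x + h *\<^sub>R u) \<le> (1 - h) * f x + h * f u"
    using convex_onD[OF cvx, of h x u] h by auto
  moreover have "(1 - h) *\<^sub>R x + h *\<^sub>R u = x + h *\<^sub>R d"
    by (simp add: d_def algebra_simps)
  ultimately show False by (simp add: p_def algebra_simps)
qed

lemma quad:
  fixes z z' y P u :: "'a::real_inner"
  assumes c': "c' = c + a * m" and zz: "c' *\<^sub>R z' = c *\<^sub>R z - a *\<^sub>R P + (a * m) *\<^sub>R y"
  shows "c / 2 * norm (u - z)^2 + a * (inner P u + m / 2 * norm (u - y)^2) - c' / 2 * norm (u - z')^2
       = c / 2 * norm z^2 + a * m / 2 * norm y^2 - c' / 2 * norm z'^2"
proof -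
  have "inner u (c' *\<^sub>R z') = inner u (c *\<^sub>R z - a *\<^sub>R P + (a * m) *\<^sub>R y)" using zz by simp
  then have e: "c' * inner u z' = c * inner u z - a * inner u P + a * m * inner u y"
    by (simp add: inner_diff_right inner_add_right)
  show ?thesis
    unfolding power2_norm_eq_inner c'
    using e unfolding c'
    apply (simp add: inner_diff_left inner_diff_right inner_commute)
    apply (simp add: field_simps)
    done
qed

lemma real_lim0:
  fixes B C :: real
  assumes "\<And>t. 0 < t \<Longrightarrow> t \<le> 1 \<Longrightarrow> 0 \<le> B + t * C"
  shows "0 \<le> B"
proof (rule ccontr)
  assume B: "\<not> 0 \<le> B"
  show False
  proof (cases "C \<le> 0")
    case True
    then show False using assms[of 1] B by simp
  next
    case False
    define t where "t = min 1 (-B / (2 * C))"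
    have "B / (2 * C) < 0" using B False by (intro divide_neg_pos) auto
    then have t: "0 < t" "t \<le> 1" by (auto simp: t_def)
    have "t * C \<le> (-B / (2 * C)) * C" using False by (intro mult_right_mono) (auto simp: t_def)
    also have "\<dots> = -B/2" using False by simp
    finally show False using assms[OF t] B by simp
  qed
qed

lemma h_conv:
  assumes "closed_convex_proper h" "h a = ereal ha" "h b = ereal hb" "0 \<le> t" "t \<le> 1"
  shows "h ((1 - t) *\<^sub>R a + t *\<^sub>R b) \<le> ereal ((1 - t) * ha + t * hb)"
proof -
  have cv: "convex (epigraph h)" using assms(1) by (simp add: closed_convex_proper_def)
  have "(a, ha) \<in> epigraph h" "(b, hb) \<in> epigraph h" using assms by (auto simp: epigraph_def)
  from convexD[OF cv this, of "1 - t" t] assms(4,5)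
  have "((1 - t) *\<^sub>R a + t *\<^sub>R b, (1 - t) * ha + t * hb) \<in> epigraph h" by simp
  then show ?thesis by (simp add: epigraph_def)
qed

lemma opt_cond:
  fixes b z yt u :: "'a::real_inner"
  assumes ccp: "closed_convex_proper h" and K: "0 \<le> K"
    and mn: "\<And>w. ereal (c + inner b (yt - z) + K / 2 * norm (yt - z)^2) + h yt
                \<le> ereal (c + inner b (w - z) + K / 2 * norm (w - z)^2) + h w"
    and hy: "h yt = ereal hy" and hu: "h u = ereal hu"
  shows "0 \<le> inner (b + K *\<^sub>R (yt - z)) (u - yt) + hu - hy"
proof (rule real_lim0)
  fix t :: real assume t: "0 < t" "t \<le> 1"
  define w where "w = (1 - t) *\<^sub>R yt + t *\<^sub>R u"
  have hw: "h w \<le> ereal ((1 - t) * hy + t * hu)"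
    unfolding w_def by (rule h_conv[OF ccp hy hu]) (use t in auto)
  have "h w \<noteq> -\<infinity>" using ccp by (simp add: closed_convex_proper_def proper_fun_def)
  with hw obtain hw' where hw': "h w = ereal hw'" "hw' \<le> (1 - t) * hy + t * hu"
    by (cases "h w") auto
  have "ereal (c + inner b (yt - z) + K / 2 * norm (yt - z)^2 + hy)
      \<le> ereal (c + inner b (w - z) + K / 2 * norm (w - z)^2 + hw')"
    using mn[of w] hy hw' by simp
  then have 1: "c + inner b (yt - z) + K / 2 * norm (yt - z)^2 + hy
      \<le> c + inner b (w - z) + K / 2 * norm (w - z)^2 + (1 - t) * hy + t * hu"
    using hw' by simp
  have wz: "w - z = (yt - z) + t *\<^sub>R (u - yt)" by (simp add: w_def algebra_simps)
  have n: "norm (w - z)^2 = norm (yt - z)^2 + 2 * t * inner (yt - z) (u - yt) + t^2 * norm (u - yt)^2"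
    unfolding wz power2_norm_eq_inner
    by (simp add: inner_add_left inner_add_right inner_commute power2_eq_square algebra_simps)
  have i: "inner b (w - z) = inner b (yt - z) + t * inner b (u - yt)"
    unfolding wz by (simp add: inner_add_right)
  have "0 \<le> t * (inner (b + K *\<^sub>R (yt - z)) (u - yt) + hu - hy) + t * (t * (K / 2 * norm (u - yt)^2))"
    using 1 unfolding n i by (simp add: inner_add_left algebra_simps power2_eq_square)
  then have "0 \<le> t * ((inner (b + K *\<^sub>R (yt - z)) (u - yt) + hu - hy) + t * (K / 2 * norm (u - yt)^2))"
    by (simp add: algebra_simps)
  then show "0 \<le> inner (b + K *\<^sub>R (yt - z)) (u - yt) + hu - hy + t * (K / 2 * norm (u - yt)^2)"
    using t by (simp add: zero_le_mult_iff)
qed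

lemma gam_le:
  fixes xt yt u x0 dfx dgx :: "'a::real_inner"
  assumes lam: "0 < lam" and mu: "mu = 1 / lam"
    and opt: "0 \<le> inner (dgx + (L + mu) *\<^sub>R (yt - xt)) (u - yt) + hu - hy"
    and cg: "fx + inner dfx (u - xt) \<le> fu"
    and dg: "dgx = dfx + (1 / lam) *\<^sub>R (xt - x0)"
    and g: "gx = fx + norm (xt - x0)^2 / (2 * lam)"
  shows "(gx + inner dgx (yt - xt) + hy + mu / 2 * norm (yt - xt)^2)
          + L * inner (xt - yt) (u - yt) + mu / 2 * norm (u - yt)^2
         \<le> fu + norm (u - x0)^2 / (2 * lam) + hu"
proof -
  have id: "(gx + inner dgx (yt - xt) + hy + mu / 2 * norm (yt - xt)^2)
          + L * inner (xt - yt) (u - yt) + mu / 2 * norm (u - yt)^2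
          + (inner (dgx + (L + mu) *\<^sub>R (yt - xt)) (u - yt) + hu - hy)
          + (fu - (fx + inner dfx (u - xt)))
         = fu + norm (u - x0)^2 / (2 * lam) + hu"
    unfolding power2_norm_eq_inner dg g mu
    using lam
    apply (simp add: inner_add_left inner_add_right inner_diff_left inner_diff_right inner_commute)
    apply (simp add: field_simps)
    done
  show ?thesis using id opt cg by linarith
qed

lemma g_smooth:
  fixes xt yt x0 dfx dgx :: "'a::real_inner"
  assumes lam: "0 < lam" and mu: "mu = 1 / lam"
    and ds: "fy \<le> fx + inner dfx (yt - xt) + L / 2 * norm (yt - xt)^2"
    and dg: "dgx = dfx + (1 / lam) *\<^sub>R (xt - x0)"
    and g: "gx = fx + norm (xt - x0)^2 / (2 * lam)"
    and gy: "gy = fy + norm (yt - x0)^2 / (2 * lam)"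
  shows "gy \<le> gx + inner dgx (yt - xt) + (L + mu) / 2 * norm (yt - xt)^2"
proof -
  have id: "gx + inner dgx (yt - xt) + (L + mu) / 2 * norm (yt - xt)^2 - gy
      = fx + inner dfx (yt - xt) + L / 2 * norm (yt - xt)^2 - fy"
    unfolding power2_norm_eq_inner dg g mu gy
    using lam
    apply (simp add: inner_add_left inner_add_right inner_diff_left inner_diff_right inner_commute)
    apply (simp add: field_simps)
    done
  show ?thesis using id ds by linarith
qed

lemma core:
  fixes P y u x xt yt :: "'a::real_inner"
  assumes Ap: "A' = A + a" "0 < A'" and xt: "A' *\<^sub>R xt = A *\<^sub>R y + a *\<^sub>R x"
    and P: "P = xt - yt" and c: "c * A' = L * a^2" and L: "0 \<le> L"
  shows "A' * (k + L / 2 * norm P^2)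
     \<le> A * (k + L * inner P (y - yt)) + a * (k + L * inner P (u - yt)) + c / 2 * norm (u - x)^2"
proof -
  have "inner P (A *\<^sub>R y + a *\<^sub>R x) = inner P (A' *\<^sub>R xt)" using xt by simp
  then have e1: "A * inner P y + a * inner P x = A' * inner P xt" by (simp add: inner_add_right)
  have s1: "A * inner P (y - yt) + a * inner P (u - yt) = A' * norm P^2 + a * inner P (u - x)"
    using e1 unfolding power2_norm_eq_inner Ap(1) P
    by (simp add: inner_diff_right inner_diff_left algebra_simps)
  have s2: "c / 2 * norm (u - x)^2 = L * a^2 / (2 * A') * norm (u - x)^2"
    using c Ap(2) by (simp add: field_simps)
  have "0 \<le> L / (2 * A') * norm (A' *\<^sub>R P + a *\<^sub>R (u - x))^2" using L Ap(2) by simp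
  also have "\<dots> = L * A' / 2 * norm P^2 + L * a * inner P (u - x) + L * a^2 / (2 * A') * norm (u - x)^2"
    unfolding power2_norm_eq_inner using Ap(2)
    apply (simp add: inner_add_left inner_add_right)
    apply (simp add: field_simps power2_eq_square inner_commute)
    done
  finally have s3: "0 \<le> L * A' / 2 * norm P^2 + L * a * inner P (u - x) + L * a^2 / (2 * A') * norm (u - x)^2" .
  have "A * (k + L * inner P (y - yt)) + a * (k + L * inner P (u - yt))
      = A' * k + L * (A * inner P (y - yt) + a * inner P (u - yt))" using Ap(1) by (simp add: algebra_simps)
  also have "\<dots> = A' * k + L * A' * norm P^2 + L * a * inner P (u - x)"
    using arg_cong[OF s1, of "\<lambda>z. L * z"] by (simp add: algebra_simps)
  finally show ?thesis using s2 s3 by (simp add: algebra_simps)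
qed

lemma final_ineq:
  fixes lam A N E F :: real
  assumes lam: "0 < lam" and A: "3 * lam \<le> A" and N: "0 \<le> N" and E: "0 \<le> E" and F: "0 \<le> F"
    and FN: "F^2 \<le> lam * N^2 / (lam + A)" and tri: "N \<le> E + F"
  shows "N^2 / (2 * A) \<le> E^2 / (A - 2 * lam) \<and> N / (lam + A) \<le> 3 * E / (2 * A)"
proof
  have Ap: "0 < A" using lam A by linarith
  define s where "s = sqrt (lam / A)"
  have s0: "0 \<le> s" using lam Ap by (simp add: s_def)
  have s2: "s^2 = lam / A" using lam Ap by (simp add: s_def)
  have lamA: "lam = s^2 * A" using s2 Ap by (simp add: field_simps)
  have "lam * N^2 / (lam + A) \<le> lam * N^2 / A"
    using lam Ap by (intro divide_left_mono) (auto intro: mult_pos_pos)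
  then have "F^2 \<le> (s * N)^2" using FN s2 by (simp add: power_mult_distrib)
  then have Fs: "F \<le> s * N" using F s0 N by (meson power2_le_imp_le mult_nonneg_nonneg)
  have "lam / A \<le> 1/3" using A Ap by (simp add: divide_simps)
  then have "s^2 \<le> 1/3" using s2 by simp
  then have s1: "s < 1"
  proof (rule contrapos_pp)
    assume "\<not> s < 1"
    then have "1 \<le> s^2" by (simp add: one_le_power)
    then show "\<not> s^2 \<le> 1/3" by simp
  qed
  have EN: "(1 - s) * N \<le> E" using tri Fs by (simp add: algebra_simps)
  have "((1 - s) * N)^2 \<le> E^2" using EN s1 N by (intro power_mono) auto
  then have E2: "(1 - s)^2 * N^2 \<le> E^2" by (simp add: power_mult_distrib)
  have Am: "0 < A - 2 * lam" using lam A by linarith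
  have key: "A - 2 * lam \<le> 2 * A * (1 - s)^2"
  proof -
    have "0 \<le> A * (1 - 2 * s)^2" using Ap by simp
    then show ?thesis unfolding lamA by (simp add: power2_eq_square algebra_simps)
  qed
  have "N^2 * (A - 2 * lam) \<le> N^2 * (2 * A * (1 - s)^2)" using key by (simp add: mult_left_mono)
  also have "\<dots> \<le> 2 * A * E^2" using E2 Ap by (simp add: algebra_simps mult_left_mono)
  finally have "N^2 * (A - 2 * lam) \<le> 2 * A * E^2" .
  then show "N^2 / (2 * A) \<le> E^2 / (A - 2 * lam)" using Ap Am by (simp add: divide_simps mult.commute)
next
  have Ap: "0 < A" using lam A by linarith
  define r where "r = sqrt (lam / (lam + A))"
  have r0: "0 \<le> r" using lam Ap by (simp add: r_def)
  have r2: "r^2 = lam / (lam + A)" using lam Ap by (simp add: r_def)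
  have lamr: "lam = r^2 * (lam + A)" using r2 lam Ap by (simp add: field_simps)
  have "F^2 \<le> (r * N)^2" using FN r2 by (simp add: power_mult_distrib)
  then have Fr: "F \<le> r * N" using F r0 N by (meson power2_le_imp_le mult_nonneg_nonneg)
  have "lam / (lam + A) \<le> 1/4" using A Ap lam by (simp add: divide_simps)
  then have "r^2 \<le> 1/4" using r2 by simp
  then have rh: "r \<le> 1/2"
  proof (rule contrapos_pp)
    assume "\<not> r \<le> 1/2"
    then have "(1/2)^2 < r^2" by (intro power_strict_mono) auto
    then show "\<not> r^2 \<le> 1/4" by (simp add: power2_eq_square)
  qed
  have EN: "(1 - r) * N \<le> E" using tri Fr by (simp add: algebra_simps)
  have Aeq: "(1 - r) * (lam + A) * (1 + r) = A"
    using lamr by (simp add: power2_eq_square algebra_simps)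
  have "2 * A \<le> 3 * ((1 - r) * (lam + A))"
  proof -
    have "2 * A = 2 * (1 + r) * ((1 - r) * (lam + A))" using Aeq by (simp add: algebra_simps)
    also have "\<dots> \<le> 3 * ((1 - r) * (lam + A))"
      using rh r0 lam Ap by (intro mult_right_mono) auto
    finally show ?thesis .
  qed
  then have "N * (2 * A) \<le> N * (3 * ((1 - r) * (lam + A)))" using N by (rule mult_left_mono)
  also have "\<dots> = 3 * (lam + A) * ((1 - r) * N)" by (simp add: algebra_simps)
  also have "\<dots> \<le> 3 * (lam + A) * E" using EN lam Ap by (intro mult_left_mono) auto
  finally show "N / (lam + A) \<le> 3 * E / (2 * A)" using Ap lam by (simp add: divide_simps algebra_simps)
qed
theorem lemma2p7:
  fixes f :: "real^'n \<Rightarrow> real" and df :: "real^'n \<Rightarrow> real^'n"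
    and h :: "real^'n \<Rightarrow> ereal"
    and L lam :: real and x0 :: "real^'n"
    and g :: "real^'n \<Rightarrow> real" and dg :: "real^'n \<Rightarrow> real^'n"
    and psi :: "real^'n \<Rightarrow> ereal" and mu :: real
    and A a tau :: "nat \<Rightarrow> real"
    and x y xt yt :: "nat \<Rightarrow> real^'n"
    and Gam :: "nat \<Rightarrow> real^'n \<Rightarrow> real"
    and j :: nat and xh :: "real^'n"
  assumes f_convex: "convex_on UNIV f"
    and f_grad: "\<And>u. (f has_derivative (\<lambda>v. inner (df u) v)) (at u)"
    and f_smooth: "\<And>u w. norm (df u - df w) \<le> L * norm (u - w)"
    and L_pos: "0 < L"
    and h_ccp: "closed_convex_proper h"
    and lam_pos: "0 < lam"
    and g_def: "g = (\<lambda>u. f u + norm (u - x0)^2 / (2 * lam))"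
    and dg_def: "dg = (\<lambda>u. df u + (1 / lam) *\<^sub>R (u - x0))"
    and mu_def: "mu = 1 / lam"
    and psi_def: "psi = (\<lambda>u. ereal (g u) + h u)"
    and A0: "A 0 = 0" and tau0: "tau 0 = 1 / L" and x0_init: "x 0 = x0" and y0: "y 0 = x0"
    and a_def: "\<And>i. a i = (tau i + sqrt ((tau i)^2 + 4 * tau i * A i)) / 2"
    and tau_rec: "\<And>i. tau (Suc i) = tau i + mu * a i / L"
    and A_rec: "\<And>i. A (Suc i) = A i + a i"
    and xt_def: "\<And>i. xt i = (A i / A (Suc i)) *\<^sub>R y i + (a i / A (Suc i)) *\<^sub>R x i"
    and yt_min: "\<And>i u. ereal (lin_approx g dg (xt i) (yt (Suc i))
                          + (L + mu) / 2 * norm (yt (Suc i) - xt i)^2) + h (yt (Suc i))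
                     \<le> ereal (lin_approx g dg (xt i) u + (L + mu) / 2 * norm (u - xt i)^2) + h u"
    and y_choice: "\<And>i. y (Suc i) \<in> {y i, yt (Suc i)}"
    and y_min: "\<And>i. psi (y (Suc i)) \<le> psi (y i) \<and> psi (y (Suc i)) \<le> psi (yt (Suc i))"
    and x_rec: "\<And>i. x (Suc i) = (1 / (A (Suc i) * mu + 1)) *\<^sub>R
                   (((L + mu) * a i) *\<^sub>R yt (Suc i) - (A i * a i * L / A (Suc i)) *\<^sub>R y i)"
    and Gam0: "Gam 0 = (\<lambda>u. 0)"
    and Gam_rec: "\<And>i u. Gam (Suc i) u =
        (A i * Gam i u
         + a i * ( (lin_approx g dg (xt i) (yt (Suc i)) + real_of_ereal (h (yt (Suc i)))
                     + mu / 2 * norm (yt (Suc i) - xt i)^2)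
                   + L * inner (xt i - yt (Suc i)) (u - yt (Suc i))
                   + mu / 2 * norm (u - yt (Suc i))^2 )) / A (Suc i)"
    and j_pos: "1 \<le> j"
    and xh_min: "\<And>u. Gam j xh \<le> Gam j u"
    and A_big: "A j \<ge> 3 * lam"
  shows "psi (y j) - ereal (Gam j xh) \<le> ereal (norm (xh - x0)^2 / (2 * A j))
       \<and> norm (xh - x0)^2 / (2 * A j) \<le> norm (y j - x0)^2 / (A j - 2 * lam)
       \<and> norm ((1 / A j) *\<^sub>R (x0 - x j)) \<le> 3 * norm (y j - x0) / (2 * A j)"
proof -
  define hr where "hr = (\<lambda>u. real_of_ereal (h u))"
  define psr where "psr = (\<lambda>u. g u + hr u)"
  define gam where "gam = (\<lambda>i u. (lin_approx g dg (xt i) (yt (Suc i)) + real_of_ereal (h (yt (Suc i)))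
                     + mu / 2 * norm (yt (Suc i) - xt i)^2)
                   + L * inner (xt i - yt (Suc i)) (u - yt (Suc i))
                   + mu / 2 * norm (u - yt (Suc i))^2)"
  define kap where "kap = (\<lambda>i. lin_approx g dg (xt i) (yt (Suc i)) + real_of_ereal (h (yt (Suc i)))
                     + mu / 2 * norm (yt (Suc i) - xt i)^2)"
  have Gr: "\<And>i u. Gam (Suc i) u = (A i * Gam i u + a i * gam i u) / A (Suc i)"
    unfolding gam_def by (rule Gam_rec)
  have mu_pos: "0 < mu" using lam_pos mu_def by simp
  have hninf: "\<And>u. h u \<noteq> -\<infinity>" and hex: "\<exists>u. h u < \<infinity>"
    using h_ccp by (auto simp: closed_convex_proper_def proper_fun_def)
  have hyt: "h (yt (Suc i)) = ereal (hr (yt (Suc i)))" for i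
  proof -
    obtain w where w: "h w < \<infinity>" using hex by blast
    have "h (yt (Suc i)) \<noteq> \<infinity>"
    proof
      assume inf: "h (yt (Suc i)) = \<infinity>"
      show False using yt_min[of i w] inf w hninf[of w] by (cases "h w") auto
    qed
    then show ?thesis using hninf[of "yt (Suc i)"] by (cases "h (yt (Suc i))") (auto simp: hr_def)
  qed
  have psi_eq: "\<And>u. h u = ereal (hr u) \<Longrightarrow> psi u = ereal (psr u)"
    by (simp add: psi_def psr_def)
  have hy: "h (y (Suc i)) = ereal (hr (y (Suc i)))" and psr_y: "psr (y (Suc i)) \<le> psr (yt (Suc i))" for i
  proof -
    have p1: "psi (yt (Suc i)) = ereal (psr (yt (Suc i)))" using psi_eq hyt by blast
    have le: "psi (y (Suc i)) \<le> psi (yt (Suc i))" using y_min by blast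
    have "h (y (Suc i)) \<noteq> \<infinity>"
    proof
      assume "h (y (Suc i)) = \<infinity>"
      then have "psi (y (Suc i)) = \<infinity>" by (simp add: psi_def)
      then show False using le p1 by simp
    qed
    then show h1: "h (y (Suc i)) = ereal (hr (y (Suc i)))"
      using hninf[of "y (Suc i)"] by (cases "h (y (Suc i))") (auto simp: hr_def)
    show "psr (y (Suc i)) \<le> psr (yt (Suc i))" using le p1 psi_eq[OF h1] by simp
  qed
  have seq: "0 < tau i \<and> 0 \<le> A i \<and> tau i * L = 1 + A i * mu" for i
  proof (induction i)
    case 0 then show ?case using A0 tau0 L_pos by simp
  next
    case (Suc i)
    have "0 \<le> sqrt ((tau i)^2 + 4 * tau i * A i)" using Suc by (intro real_sqrt_ge_zero add_nonneg_nonneg mult_nonneg_nonneg) auto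
    moreover have "0 < tau i" using Suc by simp
    ultimately have "0 < a i" unfolding a_def[of i] by (intro divide_pos_pos add_pos_nonneg) auto
    then show ?case using Suc tau_rec[of i] A_rec[of i] L_pos mu_pos
      by (auto simp: algebra_simps intro!: add_pos_nonneg)
  qed
  have a_pos: "0 < a i" for i
  proof -
    have "0 \<le> sqrt ((tau i)^2 + 4 * tau i * A i)" using seq[of i] by (intro real_sqrt_ge_zero add_nonneg_nonneg mult_nonneg_nonneg) auto
    moreover have "0 < tau i" using seq[of i] by simp
    ultimately show ?thesis unfolding a_def[of i] by (intro divide_pos_pos add_pos_nonneg) auto
  qed
  have a_sq: "(a i)^2 = tau i * A (Suc i)" for i
  proof -
    define s where "s = sqrt ((tau i)^2 + 4 * tau i * A i)"
    have "0 \<le> (tau i)^2 + 4 * tau i * A i" using seq[of i] by (intro add_nonneg_nonneg mult_nonneg_nonneg) auto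
    then have s2: "s^2 = (tau i)^2 + 4 * tau i * A i" by (simp add: s_def)
    show ?thesis unfolding a_def[of i] A_rec[of i] s_def[symmetric]
      using s2 by (simp add: power2_eq_square field_simps)
  qed
  have A_pos: "0 < A (Suc i)" for i using seq[of i] a_pos[of i] A_rec[of i] by simp
  have Aj_pos: "0 < A j" using A_pos[of "j - 1"] j_pos by simp
  have cL: "(1 + A i * mu) * A (Suc i) = L * (a i)^2" for i
  proof -
    have "1 + A i * mu = tau i * L" using seq[of i] by simp
    then have "(1 + A i * mu) * A (Suc i) = L * (tau i * A (Suc i))" by simp
    then show ?thesis using a_sq[of i] by simp
  qed
  have xt_rel: "A (Suc i) *\<^sub>R xt i = A i *\<^sub>R y i + a i *\<^sub>R x i" for i
    using A_pos[of i] by (simp add: vec_eq_iff xt_def field_simps)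
  have V: "(1 + A (Suc i) * mu) *\<^sub>R x (Suc i)
      = (1 + A i * mu) *\<^sub>R x i - (a i * L) *\<^sub>R (xt i - yt (Suc i)) + (a i * mu) *\<^sub>R yt (Suc i)" for i
  proof -
    have p: "0 < A (Suc i)" by (rule A_pos)
    have q: "0 < 1 + A (Suc i) * mu" using p mu_pos by (simp add: add_pos_pos)
    have c0: "1 + A i * mu = L * (a i)^2 / A (Suc i)" using cL[of i] p by (simp add: field_simps)
    have "(1 + A (Suc i) * mu) *\<^sub>R x (Suc i)
        = ((L + mu) * a i) *\<^sub>R yt (Suc i) - (A i * a i * L / A (Suc i)) *\<^sub>R y i"
    proof -
      have "A (Suc i) * mu + 1 = 1 + A (Suc i) * mu" by simp
      then have e: "(1 + A (Suc i) * mu) * (1 / (A (Suc i) * mu + 1)) = 1" using q by simp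
      show ?thesis unfolding x_rec[of i] scaleR_scaleR e by simp
    qed
    also have "\<dots> = (1 + A i * mu) *\<^sub>R x i - (a i * L) *\<^sub>R (xt i - yt (Suc i)) + (a i * mu) *\<^sub>R yt (Suc i)"
      unfolding c0 using p by (simp add: vec_eq_iff xt_def field_simps power2_eq_square)
    finally show ?thesis .
  qed
  define z where "z = (\<lambda>j. (1 / (A j * mu)) *\<^sub>R ((1 + A j * mu) *\<^sub>R x j - x0))"
  have Zx: "(A j * mu) *\<^sub>R z j = (1 + A j * mu) *\<^sub>R x j - x0" for j
  proof (cases j)
    case 0 then show ?thesis using A0 x0_init by (simp add: z_def)
  next
    case (Suc k)
    then have "A j \<noteq> 0" "mu \<noteq> 0" using A_pos[of k] mu_pos by auto
    then show ?thesis by (simp add: z_def)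
  qed
  have GF: "\<exists>M. \<forall>u. A j * Gam j u = M + A j * mu / 2 * norm (u - z j)^2" for j
  proof (induction j)
    case 0 then show ?case using A0 Gam0 by simp
  next
    case (Suc i)
    then obtain M where M: "\<And>u. A i * Gam i u = M + A i * mu / 2 * norm (u - z i)^2" by blast
    define P where "P = xt i - yt (Suc i)"
    have c2: "(A (Suc i) * mu) *\<^sub>R z (Suc i)
        = (A i * mu) *\<^sub>R z i - a i *\<^sub>R (L *\<^sub>R P) + (a i * mu) *\<^sub>R yt (Suc i)"
      unfolding Zx P_def using V[of i] by (simp add: algebra_simps)
    have c1: "A (Suc i) * mu = A i * mu + a i * mu" using A_rec[of i] by (simp add: algebra_simps)
    define K where "K = A i * mu / 2 * norm (z i)^2 + a i * mu / 2 * norm (yt (Suc i))^2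
                       - A (Suc i) * mu / 2 * norm (z (Suc i))^2"
    have Q: "A i * mu / 2 * norm (u - z i)^2 + a i * (inner (L *\<^sub>R P) u + mu / 2 * norm (u - yt (Suc i))^2)
              - A (Suc i) * mu / 2 * norm (u - z (Suc i))^2 = K" for u
      unfolding K_def by (rule quad[OF c1 c2])
    have G: "a i * gam i u = a i * (kap i - L * inner P (yt (Suc i)))
              + a i * (inner (L *\<^sub>R P) u + mu / 2 * norm (u - yt (Suc i))^2)" for u
      by (simp add: gam_def kap_def P_def inner_diff_right algebra_simps)
    have "A (Suc i) * Gam (Suc i) u
        = (M + a i * (kap i - L * inner P (yt (Suc i))) + K) + A (Suc i) * mu / 2 * norm (u - z (Suc i))^2" for u
    proof -
      have "A (Suc i) * Gam (Suc i) u = A i * Gam i u + a i * gam i u"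
        using Gr[of i u] A_pos[of i] by simp
      then show ?thesis using M[of u] G[of u] Q[of u] by linarith
    qed
    then show ?case by blast
  qed
  have PhiF: "A j * Gam j u + norm (u - x0)^2 / 2
      = A j * Gam j (x j) + norm (x j - x0)^2 / 2 + (1 + A j * mu) / 2 * norm (u - x j)^2" for j u
  proof -
    obtain M where M: "\<And>u. A j * Gam j u = M + A j * mu / 2 * norm (u - z j)^2" using GF by blast
    have c1: "1 + A j * mu = A j * mu + 1 * 1" by simp
    have c2: "(1 + A j * mu) *\<^sub>R x j = (A j * mu) *\<^sub>R z j - 1 *\<^sub>R 0 + (1 * 1) *\<^sub>R x0"
      unfolding Zx by simp
    note Q = quad[OF c1 c2]
    show ?thesis using Q[of u] Q[of "x j"] M[of u] M[of "x j"] by simp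
  qed
  have gamle: "gam i u \<le> psr u" if hu: "h u = ereal (hr u)" for i u
  proof -
    have K0: "0 \<le> L + mu" using L_pos mu_pos by simp
    have opt: "0 \<le> inner (dg (xt i) + (L + mu) *\<^sub>R (yt (Suc i) - xt i)) (u - yt (Suc i)) + hr u - hr (yt (Suc i))"
      by (rule opt_cond[OF h_ccp K0 yt_min[of i, unfolded lin_approx_def] hyt hu])
    have cg: "f (xt i) + inner (df (xt i)) (u - xt i) \<le> f u" by (rule convex_grad[OF f_convex f_grad])
    have dgx: "dg (xt i) = df (xt i) + (1 / lam) *\<^sub>R (xt i - x0)" by (simp add: dg_def)
    have gx: "g (xt i) = f (xt i) + norm (xt i - x0)^2 / (2 * lam)" by (simp add: g_def)
    have "(g (xt i) + inner (dg (xt i)) (yt (Suc i) - xt i) + hr (yt (Suc i)) + mu / 2 * norm (yt (Suc i) - xt i)^2)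
          + L * inner (xt i - yt (Suc i)) (u - yt (Suc i)) + mu / 2 * norm (u - yt (Suc i))^2
         \<le> f u + norm (u - x0)^2 / (2 * lam) + hr u"
      by (rule gam_le[OF lam_pos mu_def opt cg dgx gx])
    then show ?thesis by (simp add: gam_def psr_def g_def hr_def lin_approx_def)
  qed
  have GamLe: "\<forall>u. h u = ereal (hr u) \<longrightarrow> A j * Gam j u \<le> A j * psr u" for j
  proof (induction j)
    case 0 then show ?case using A0 by simp
  next
    case (Suc i)
    show ?case
    proof (intro allI impI)
      fix u assume hu: "h u = ereal (hr u)"
      have "A (Suc i) * Gam (Suc i) u = A i * Gam i u + a i * gam i u"
        using Gr[of i u] A_pos[of i] by simp
      also have "\<dots> \<le> A i * psr u + a i * psr u"
        using Suc hu gamle[OF hu, of i] a_pos[of i] by (intro add_mono[OF _ mult_left_mono]) auto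
      also have "\<dots> = A (Suc i) * psr u" using A_rec[of i] by (simp add: algebra_simps)
      finally show "A (Suc i) * Gam (Suc i) u \<le> A (Suc i) * psr u" .
    qed
  qed
  have KI: "\<forall>u. A j * psr (y j) \<le> A j * Gam j u + norm (u - x0)^2 / 2" for j
  proof (induction j)
    case 0 then show ?case using A0 by simp
  next
    case (Suc i)
    show ?case
    proof
      fix u
      define P where "P = xt i - yt (Suc i)"
      define c where "c = 1 + A i * mu"
      have E1: "A (Suc i) * Gam (Suc i) u = A i * Gam i u + a i * gam i u"
        using Gr[of i u] A_pos[of i] by simp
      have Ph: "A i * Gam i u + norm (u - x0)^2 / 2
          = A i * Gam i (x i) + norm (x i - x0)^2 / 2 + c / 2 * norm (u - x i)^2"
        unfolding c_def by (rule PhiF)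
      have IH: "A i * psr (y i) \<le> A i * Gam i (x i) + norm (x i - x0)^2 / 2" using Suc by blast
      have GY: "A i * gam i (y i) \<le> A i * psr (y i)"
      proof (cases i)
        case 0 then show ?thesis using A0 by simp
      next
        case (Suc k)
        then have "h (y i) = ereal (hr (y i))" using hy[of k] by simp
        then show ?thesis using gamle seq[of i] by (intro mult_left_mono) auto
      qed
      have glow: "kap i + L * inner P (v - yt (Suc i)) \<le> gam i v" for v
        using mu_pos by (simp add: gam_def kap_def P_def)
      have G1: "A i * (kap i + L * inner P (y i - yt (Suc i))) \<le> A i * gam i (y i)"
        using glow seq[of i] by (intro mult_left_mono) auto
      have G2: "a i * (kap i + L * inner P (u - yt (Suc i))) \<le> a i * gam i u"
        using glow a_pos[of i] by (intro mult_left_mono) auto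
      have cc: "c * A (Suc i) = L * (a i)^2" unfolding c_def by (rule cL)
      have CO: "A (Suc i) * (kap i + L / 2 * norm P^2)
          \<le> A i * (kap i + L * inner P (y i - yt (Suc i))) + a i * (kap i + L * inner P (u - yt (Suc i)))
             + c / 2 * norm (u - x i)^2"
        by (rule core[OF A_rec A_pos xt_rel P_def cc]) (use L_pos in simp)
      have ds: "f (yt (Suc i)) \<le> f (xt i) + inner (df (xt i)) (yt (Suc i) - xt i) + L / 2 * norm (yt (Suc i) - xt i)^2"
        by (rule descent[OF f_grad f_smooth])
      have dgx: "dg (xt i) = df (xt i) + (1 / lam) *\<^sub>R (xt i - x0)" by (simp add: dg_def)
      have gx: "g (xt i) = f (xt i) + norm (xt i - x0)^2 / (2 * lam)" by (simp add: g_def)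
      have gy: "g (yt (Suc i)) = f (yt (Suc i)) + norm (yt (Suc i) - x0)^2 / (2 * lam)" by (simp add: g_def)
      have sm: "g (yt (Suc i)) \<le> g (xt i) + inner (dg (xt i)) (yt (Suc i) - xt i) + (L + mu) / 2 * norm (yt (Suc i) - xt i)^2"
        by (rule g_smooth[OF lam_pos mu_def ds dgx gx gy])
      have nP: "norm P = norm (yt (Suc i) - xt i)" unfolding P_def by (rule norm_minus_commute)
      have S1: "psr (yt (Suc i)) \<le> kap i + L / 2 * norm P^2"
        using sm unfolding psr_def kap_def nP lin_approx_def hr_def by (simp add: field_simps)
      have S2: "A (Suc i) * psr (y (Suc i)) \<le> A (Suc i) * (kap i + L / 2 * norm P^2)"
        using S1 psr_y[of i] A_pos[of i] by (intro mult_left_mono) auto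
      show "A (Suc i) * psr (y (Suc i)) \<le> A (Suc i) * Gam (Suc i) u + norm (u - x0)^2 / 2"
        using S2 CO G1 G2 GY IH Ph E1 by linarith
    qed
  qed
  define Aj where "Aj = A j"
  have Ajp: "0 < Aj" using Aj_pos by (simp add: Aj_def)
  obtain M where M: "\<And>u. A j * Gam j u = M + A j * mu / 2 * norm (u - z j)^2" using GF by blast
  have xhz: "xh = z j"
  proof -
    have "A j * Gam j xh \<le> A j * Gam j (z j)" using xh_min[of "z j"] Aj_pos by simp
    then have "A j * mu / 2 * norm (xh - z j)^2 \<le> 0" using M[of xh] M[of "z j"] by simp
    then have "norm (xh - z j)^2 \<le> 0" using Aj_pos mu_pos by (simp add: mult_le_0_iff)
    then show ?thesis by simp
  qed
  have GQ: "A j * Gam j u = A j * Gam j xh + A j * mu / 2 * norm (u - xh)^2" for u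
    using M[of u] M[of xh] xhz by simp
  define c where "c = 1 + A j * mu"
  have cp: "0 < c" using Aj_pos mu_pos by (simp add: c_def add_pos_pos)
  have Zh: "(A j * mu) *\<^sub>R xh = c *\<^sub>R x j - x0" using Zx[of j] xhz by (simp add: c_def)
  have d1: "c *\<^sub>R (x j - xh) = x0 - xh"
    using Zh unfolding c_def by (simp add: vec_eq_iff algebra_simps)
  have d2: "c *\<^sub>R (x0 - x j) = (A j * mu) *\<^sub>R (x0 - xh)"
    using Zh unfolding c_def by (simp add: vec_eq_iff algebra_simps)
  define N where "N = norm (xh - x0)"
  define E where "E = norm (y j - x0)"
  define F where "F = norm (y j - xh)"
  have n1: "norm (x j - xh) = N / c"
  proof -
    have "c * norm (x j - xh) = N" using arg_cong[OF d1, of norm] cp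
      by (simp add: N_def norm_minus_commute)
    then show ?thesis using cp by (simp add: field_simps)
  qed
  have n2: "norm (x j - x0) = A j * mu * N / c"
  proof -
    have "c * norm (x0 - x j) = A j * mu * N" using arg_cong[OF d2, of norm] cp Aj_pos mu_pos
      by (simp add: N_def norm_minus_commute)
    then show ?thesis using cp by (simp add: field_simps norm_minus_commute)
  qed
  have lamc: "mu / c = 1 / (lam + A j)"
    using lam_pos Aj_pos unfolding c_def mu_def by (simp add: field_simps)
  have KIx: "A j * psr (y j) \<le> A j * Gam j xh + A j * mu / 2 * (N / c)^2 + (A j * mu * N / c)^2 / 2"
    using KI[of j] GQ[of "x j"] n1 n2 by (metis add.assoc order_trans order.refl)
  have alg: "A j * mu / 2 * (N / c)^2 + (A j * mu * N / c)^2 / 2 = A j * (N^2 / (2 * (lam + A j)))"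
  proof -
    have cn: "c \<noteq> 0" using cp by simp
    have "A j * mu / 2 * (N / c)^2 + (A j * mu * N / c)^2 / 2 = A j * mu * N^2 * (1 + A j * mu) / (2 * c^2)"
      using cn by (simp add: field_simps power2_eq_square)
    also have "\<dots> = A j * mu * N^2 * c / (2 * c^2)" by (simp add: c_def)
    finally have "A j * mu / 2 * (N / c)^2 + (A j * mu * N / c)^2 / 2 = A j * mu * N^2 * c / (2 * c^2)" .
    also have "\<dots> = A j * (mu / c) * N^2 / 2" using cp by (simp add: power2_eq_square field_simps)
    finally show ?thesis unfolding lamc by simp
  qed
  have P1: "psr (y j) \<le> Gam j xh + N^2 / (2 * (lam + A j))"
  proof -
    have "A j * psr (y j) \<le> A j * (Gam j xh + N^2 / (2 * (lam + A j)))"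
      using KIx alg by (simp add: algebra_simps)
    then show ?thesis using Aj_pos by simp
  qed
  have hyj: "h (y j) = ereal (hr (y j))" using hy[of "j - 1"] j_pos by simp
  have P2: "Gam j (y j) \<le> psr (y j)"
    using GamLe[of j] hyj Aj_pos by simp
  have FN: "F^2 \<le> lam * N^2 / (lam + A j)"
  proof -
    have "A j * Gam j (y j) = A j * (Gam j xh + mu / 2 * F^2)" using GQ[of "y j"] by (simp add: F_def algebra_simps)
    then have "Gam j (y j) = Gam j xh + mu / 2 * F^2" using Aj_pos by simp
    then have "mu / 2 * F^2 \<le> N^2 / (2 * (lam + A j))" using P1 P2 by linarith
    then have "F^2 / lam \<le> N^2 / (lam + A j)" unfolding mu_def using lam_pos Aj_pos by (simp add: field_simps)
    then show ?thesis using lam_pos Aj_pos by (simp add: field_simps)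
  qed
  have tri: "N \<le> E + F"
  proof -
    have "xh - x0 = (y j - x0) - (y j - xh)" by simp
    then have "N \<le> norm (y j - x0) + norm (y j - xh)" unfolding N_def by (metis norm_triangle_ineq4)
    then show ?thesis by (simp add: E_def F_def)
  qed
  have FI: "N^2 / (2 * A j) \<le> E^2 / (A j - 2 * lam) \<and> N / (lam + A j) \<le> 3 * E / (2 * A j)"
    by (rule final_ineq[OF lam_pos A_big]) (use tri FN in \<open>auto simp: N_def E_def F_def\<close>)
  have G1: "psi (y j) - ereal (Gam j xh) \<le> ereal (N^2 / (2 * A j))"
  proof -
    have "psi (y j) = ereal (psr (y j))" using psi_eq hyj by blast
    moreover have "N^2 / (2 * (lam + A j)) \<le> N^2 / (2 * A j)"
      using lam_pos Aj_pos by (intro divide_left_mono) auto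
    ultimately show ?thesis using P1 by simp
  qed
  have vn: "norm ((1 / A j) *\<^sub>R (x0 - x j)) = N / (lam + A j)"
  proof -
    have "norm ((1 / A j) *\<^sub>R (x0 - x j)) = norm (x0 - x j) / A j" using Aj_pos by simp
    also have "\<dots> = mu * N / c" using n2 Aj_pos by (simp add: norm_minus_commute)
    also have "\<dots> = N / (lam + A j)" using lamc by (metis times_divide_eq_left mult.commute divide_divide_eq_left' times_divide_eq_right mult_1)
    finally show ?thesis .
  qed
  show ?thesis using G1 FI vn by (simp add: N_def E_def)
qed
end
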